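(* Let $f\in C^{1,1}_L(\mathbb{R}^n)$, let $\mathcal{Y}=\{y_1,\dots,y_{n+1}\}\subset\mathbb{R}^n$ be affinely independent, let $m$ be the affine function interpolating $f$ on $\mathcal{Y}$, and let $y_0\in\mathbb{R}^n$ with barycentric coordinates $\ell_1,\dots,\ell_{n+1}$ and $\ell_0=-1$. Then for every $u\in\mathbb{R}^n$, $$|m(y_0)-f(y_0)|\le \frac{L}{2}\sum_{i=0}^{n+1}|\ell_i|\,\|y_i-u\|^2 .$$
   Context: Let $n\ge1$ and $L>0$. $C^{1,1}_L(\mathbb{R}^n)$ denotes the set of differentiable functions $f:\mathbb{R}^n\to\mathbb{R}$ with $\|\nabla f(u_1)-\nabla f(u_2)\|\le L\|u_1-u_2\|$ for all $u_1,u_2\in\mathbb{R}^n$ (Euclidean norm). For an affinely independent set $\mathcal{Y}=\{y_1,\dots,y_{n+1}\}\subset\mathbb{R}^n$, the interpolating affine function $m$ is the unique affine $m:\mathbb{R}^n\to\mathbb{R}$ with $m(y_i)=f(y_i)$ for $i=1,\dots,n+1$. The barycentric coordinates of $y_0\in\mathbb{R}^n$ with respect to $\mathcal{Y}$ are the unique reals $\ell_1,\dots,\ell_{n+1}$ with $\sum_{i=1}^{n+1}\ell_i=1$ and $\sum_{i=1}^{n+1}\ell_iy_i=y_0$; one sets $\ell_0=-1$, so that $\sum_{i=0}^{n+1}\ell_i=0$, $\sum_{i=0}^{n+1}\ell_iy_i=0$, and $m(y_0)=\sum_{i=1}^{n+1}\ell_if(y_i)$. *)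

theory Defs
  imports "HOL-Analysis.Analysis"
begin

definition grad :: "(real^'n \<Rightarrow> real) \<Rightarrow> real^'n \<Rightarrow> real^'n" where
  "grad f x = (SOME g. (f has_derivative (\<lambda>h. g \<bullet> h)) (at x))"

definition C11 :: "real \<Rightarrow> (real^'n \<Rightarrow> real) \<Rightarrow> bool" where
  "C11 L f \<longleftrightarrow> (\<forall>x. f differentiable (at x)) \<and>
     (\<forall>u1 u2. norm (grad f u1 - grad f u2) \<le> L * norm (u1 - u2))"

definition affine_fun :: "(real^'n \<Rightarrow> real) \<Rightarrow> bool" where
  "affine_fun m \<longleftrightarrow> (\<exists>a c. \<forall>x. m x = a \<bullet> x + c)"

end

theory Submission
  imports Defs
begin

lemma grad_deriv:
  fixes f :: "real^'n \<Rightarrow> real"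
  assumes "f differentiable (at x)"
  shows "(f has_derivative (\<lambda>h. grad f x \<bullet> h)) (at x)"
proof -
  obtain D where D: "(f has_derivative D) (at x)" using assms differentiable_def by blast
  then have lin: "linear D" using has_derivative_linear by blast
  have "D = (\<lambda>h. adjoint D 1 \<bullet> h)"
    using adjoint_clauses(2)[OF lin, of 1] by auto
  with D have "\<exists>g. (f has_derivative (\<lambda>h. g \<bullet> h)) (at x)" by metis
  then show ?thesis unfolding grad_def by (rule someI_ex)
qed

lemma descent:
  fixes f :: "real^'n \<Rightarrow> real"
  assumes "C11 L f"
  shows "\<bar>f y - f u - grad f u \<bullet> (y - u)\<bar> \<le> L / 2 * (norm (y - u))\<^sup>2"
proof -
  define d where "d = y - u"
  have dif: "\<And>x. (f has_derivative (\<lambda>h. grad f x \<bullet> h)) (at x)"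
    using assms grad_deriv unfolding C11_def by blast
  have lip: "\<And>a b. norm (grad f a - grad f b) \<le> L * norm (a - b)"
    using assms unfolding C11_def by blast
  have Dg: "\<And>t. ((\<lambda>t. f (u + t *\<^sub>R d)) has_real_derivative (grad f (u + t *\<^sub>R d) \<bullet> d)) (at t)"
  proof -
    fix t :: real
    have "((\<lambda>t. u + t *\<^sub>R d) has_derivative (\<lambda>s. s *\<^sub>R d)) (at t)"
      by (auto intro!: derivative_eq_intros)
    from has_derivative_compose[OF this dif]
    have "((\<lambda>t. f (u + t *\<^sub>R d)) has_derivative (\<lambda>s. grad f (u + t *\<^sub>R d) \<bullet> (s *\<^sub>R d))) (at t)"
      by (simp add: o_def)
    moreover have "(\<lambda>s. grad f (u + t *\<^sub>R d) \<bullet> (s *\<^sub>R d)) = (\<lambda>s. (grad f (u + t *\<^sub>R d) \<bullet> d) * s)"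
      by (auto simp: inner_scaleR_right)
    ultimately show "?thesis t" by (simp add: has_field_derivative_def)
  qed
  have bnd: "\<And>t. 0 \<le> t \<Longrightarrow> \<bar>(grad f (u + t *\<^sub>R d) - grad f u) \<bullet> d\<bar> \<le> L * t * (norm d)\<^sup>2"
  proof -
    fix t :: real assume t: "0 \<le> t"
    have "\<bar>(grad f (u + t *\<^sub>R d) - grad f u) \<bullet> d\<bar> \<le> norm (grad f (u + t *\<^sub>R d) - grad f u) * norm d"
      by (rule Cauchy_Schwarz_ineq2)
    also have "\<dots> \<le> L * norm (t *\<^sub>R d) * norm d"
      using lip[of "u + t *\<^sub>R d" u] by (simp add: mult_right_mono)
    also have "\<dots> = L * t * (norm d)\<^sup>2" using t by (simp add: power2_eq_square)
    finally show "?thesis t" .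
  qed
  define \<phi> where "\<phi> t = f (u + t *\<^sub>R d) - t * (grad f u \<bullet> d) - L / 2 * t^2 * (norm d)\<^sup>2" for t
  define \<psi> where "\<psi> t = f (u + t *\<^sub>R d) - t * (grad f u \<bullet> d) + L / 2 * t^2 * (norm d)\<^sup>2" for t
  have "\<phi> 1 \<le> \<phi> 0"
  proof (rule DERIV_nonpos_imp_nonincreasing[of 0 1])
    fix t :: real assume t: "0 \<le> t" "t \<le> 1"
    have "(\<phi> has_real_derivative (grad f (u + t *\<^sub>R d) \<bullet> d - grad f u \<bullet> d - L * t * (norm d)\<^sup>2)) (at t)"
      unfolding \<phi>_def by (rule derivative_eq_intros Dg refl | simp)+
    moreover have "grad f (u + t *\<^sub>R d) \<bullet> d - grad f u \<bullet> d - L * t * (norm d)\<^sup>2 \<le> 0"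
      using bnd[OF t(1)] by (simp add: inner_diff_left)
    ultimately show "\<exists>y. (\<phi> has_real_derivative y) (at t) \<and> y \<le> 0" by blast
  qed simp
  moreover have "\<psi> 0 \<le> \<psi> 1"
  proof (rule DERIV_nonneg_imp_nondecreasing[of 0 1])
    fix t :: real assume t: "0 \<le> t" "t \<le> 1"
    have "(\<psi> has_real_derivative (grad f (u + t *\<^sub>R d) \<bullet> d - grad f u \<bullet> d + L * t * (norm d)\<^sup>2)) (at t)"
      unfolding \<psi>_def by (rule derivative_eq_intros Dg refl | simp)+
    moreover have "grad f (u + t *\<^sub>R d) \<bullet> d - grad f u \<bullet> d + L * t * (norm d)\<^sup>2 \<ge> 0"
      using bnd[OF t(1)] by (simp add: inner_diff_left)
    ultimately show "\<exists>y. (\<psi> has_real_derivative y) (at t) \<and> y \<ge> 0" by blast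
  qed simp
  ultimately have "f y - grad f u \<bullet> (y - u) - L * (norm (y - u))\<^sup>2 / 2 \<le> f u"
    "f u \<le> f y - grad f u \<bullet> (y - u) + L * (norm (y - u))\<^sup>2 / 2"
    unfolding \<phi>_def \<psi>_def d_def by simp_all
  then show ?thesis unfolding abs_le_iff by (simp add: field_simps)
qed
theorem theorem3p1:
  fixes f m :: "real^'n \<Rightarrow> real" and L :: real
    and y :: "nat \<Rightarrow> real^'n" and y0 u :: "real^'n" and l :: "nat \<Rightarrow> real"
  assumes "L > 0"
    and "C11 L f"
    and "inj_on y {1..CARD('n)+1}"
    and "\<not> affine_dependent (y ` {1..CARD('n)+1})"
    and "affine_fun m"
    and "\<And>i. i \<in> {1..CARD('n)+1} \<Longrightarrow> m (y i) = f (y i)"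
    and "(\<Sum>i=1..CARD('n)+1. l i) = 1"
    and "(\<Sum>i=1..CARD('n)+1. l i *\<^sub>R y i) = y0"
  shows "\<bar>m y0 - f y0\<bar> \<le> L / 2 * (\<bar>-1\<bar> * (norm (y0 - u))\<^sup>2
            + (\<Sum>i=1..CARD('n)+1. \<bar>l i\<bar> * (norm (y i - u))\<^sup>2))"
proof -
  define I where "I = {1..CARD('n)+1}"
  define g where "g = grad f u"
  define r where "r x = f x - f u - g \<bullet> (x - u)" for x
  have rb: "\<And>x. \<bar>r x\<bar> \<le> L / 2 * (norm (x - u))\<^sup>2"
    unfolding r_def g_def using descent[OF assms(2)] by blast
  obtain a c where mac: "\<And>x. m x = a \<bullet> x + c" using assms(5) unfolding affine_fun_def by blast
  have l1: "sum l I = 1" using assms(7) I_def by simp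
  have ly: "(\<Sum>i\<in>I. l i *\<^sub>R y i) = y0" using assms(8) I_def by simp
  have "m y0 = a \<bullet> (\<Sum>i\<in>I. l i *\<^sub>R y i) + c * sum l I" using ly l1 mac by simp
  also have "\<dots> = (\<Sum>i\<in>I. l i * m (y i))"
    by (simp add: mac inner_sum_right sum_distrib_left sum_distrib_right distrib_left sum.distrib mult.commute)
  also have "\<dots> = (\<Sum>i\<in>I. l i * f (y i))" using assms(6) I_def by simp
  finally have my0: "m y0 = (\<Sum>i\<in>I. l i * f (y i))" .
  have fy: "\<And>x. f x = f u + g \<bullet> x - g \<bullet> u + r x" unfolding r_def by (simp add: inner_diff_right)
  have "(\<Sum>i\<in>I. l i * f (y i)) = (\<Sum>i\<in>I. l i * (f u - g \<bullet> u)) + (\<Sum>i\<in>I. l i * (g \<bullet> y i)) + (\<Sum>i\<in>I. l i * r (y i))"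
    by (subst fy) (simp add: sum.distrib[symmetric] algebra_simps)
  also have "(\<Sum>i\<in>I. l i * (f u - g \<bullet> u)) = f u - g \<bullet> u" using l1 by (simp add: sum_distrib_right[symmetric])
  also have "(\<Sum>i\<in>I. l i * (g \<bullet> y i)) = g \<bullet> y0" using ly[symmetric] by (simp add: inner_sum_right)
  finally have "m y0 - f y0 = (\<Sum>i\<in>I. l i * r (y i)) - r y0" using my0 fy[of y0] by simp
  hence "\<bar>m y0 - f y0\<bar> \<le> \<bar>r y0\<bar> + (\<Sum>i\<in>I. \<bar>l i\<bar> * \<bar>r (y i)\<bar>)"
    using sum_abs[of "\<lambda>i. l i * r (y i)" I] by (simp add: abs_mult)
  also have "\<dots> \<le> L / 2 * (norm (y0 - u))\<^sup>2 + (\<Sum>i\<in>I. \<bar>l i\<bar> * (L / 2 * (norm (y i - u))\<^sup>2))"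
    by (intro add_mono rb sum_mono mult_left_mono) auto
  also have "\<dots> = L / 2 * (\<bar>-1\<bar> * (norm (y0 - u))\<^sup>2
            + (\<Sum>i=1..CARD('n)+1. \<bar>l i\<bar> * (norm (y i - u))\<^sup>2))"
    unfolding I_def by (simp add: sum_distrib_left distrib_left mult.left_commute)
  finally show ?thesis .
qed
end
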